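(* Let $\Omega\subset\mathbb{R}^d$ be an open set and let $(g^{ij})_{1\le i,j\le d}$ be a symmetric matrix of functions on $\Omega$ which is positive definite at every point of $\Omega$ and such that every entry $g^{ij}$ is a polynomial in $(x_1,\dots,x_d)$ of degree at most $2$. Write $\Gamma(f,g)=\sum_{i,j} g^{ij}\partial_i f\,\partial_j g$. Let $P_1,\dots,P_n$ be polynomials which are positive on $\Omega$ and such that for every $r\in\{1,\dots,n\}$ and every $i\in\{1,\dots,d\}$, $$\Gamma(x_i,\log P_r)=\sum_{j} g^{ij}\,\partial_j \log P_r = L_{i,r},$$ where each $L_{i,r}$ is a polynomial of degree at most $1$. For $(\alpha_1,\dots,\alpha_n)\in\mathbb{R}^n$, let $\rho=P_1^{\alpha_1}\cdots P_n^{\alpha_n}$ and let $\mathcal{L}_{\alpha_1,\dots,\alpha_n}$ be the operator on smooth functions on $\Omega$ given by $$\mathcal{L}_{\alpha_1,\dots,\alpha_n} f=\frac{1}{\rho}\sum_{i,j}\partial_i\big(\rho\, g^{ij}\partial_j f\big)=\sum_{i,j}g^{ij}\partial^2_{ij}f+\sum_i b^i\partial_i f,\qquad b^i=\sum_j\big(\partial_j g^{ij}+g^{ij}\partial_j\log\rho\big).$$ Then there exist constants $c_1,\dots,c_n$ (not depending on the $\alpha$'s) such that for every $(\alpha_1,\dots,\alpha_n)$ the function $h=P_1^{-\alpha_1}\cdots P_n^{-\alpha_n}$ satisfies $$\mathcal{L}_{\alpha_1,\dots,\alpha_n}(h)=-\Big(\sum_{r}\alpha_r c_r\Big)h,$$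 and moreover the $h$-transform of $\mathcal{L}_{\alpha_1,\dots,\alpha_n}$ by $h$ equals $\mathcal{L}_{-\alpha_1,\dots,-\alpha_n}$.
   Context: $\mathcal{L}_{\alpha_1,\dots,\alpha_n}$ is the symmetric diffusion operator associated with the carré du champ $\Gamma$ and the measure $\mu_{\alpha_1,\dots,\alpha_n}$ with density $P_1^{\alpha_1}\cdots P_n^{\alpha_n}$ with respect to Lebesgue measure on $\Omega$. For a diffusion operator $\mathcal{L}$ and a positive function $h$ with $\mathcal{L}(h)=\lambda h$ for a constant $\lambda$, the $h$-transform of $\mathcal{L}$ is the operator $\mathcal{L}^{(h)}(f)=\frac{1}{h}\mathcal{L}(hf)-\lambda f$ (equivalently $\mathcal{L}^{(h)}f=\mathcal{L}f+2\Gamma(\log h,f)$). *)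

theory Defs
  imports "HOL-Analysis.Analysis"
begin

definition pd :: "'d::finite \<Rightarrow> (real^'d \<Rightarrow> real) \<Rightarrow> real^'d \<Rightarrow> real" where
  "pd i f x = deriv (\<lambda>t. f (x + t *\<^sub>R axis i 1)) 0"

fun iter_pd :: "'d::finite list \<Rightarrow> (real^'d \<Rightarrow> real) \<Rightarrow> real^'d \<Rightarrow> real" where
  "iter_pd [] f = f"
| "iter_pd (i # is) f = pd i (iter_pd is f)"

definition smooth_on :: "(real^'d::finite) set \<Rightarrow> (real^'d \<Rightarrow> real) \<Rightarrow> bool" where
  "smooth_on \<Omega> f \<longleftrightarrow> (\<forall>is. iter_pd is f differentiable_on \<Omega>)"

inductive_set poly_fun :: "(real^'d::finite \<Rightarrow> real) set" where
  const: "(\<lambda>x. c) \<in> poly_fun"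
| coord: "(\<lambda>x. x $ k) \<in> poly_fun"
| add: "p \<in> poly_fun \<Longrightarrow> q \<in> poly_fun \<Longrightarrow> (\<lambda>x. p x + q x) \<in> poly_fun"
| mult: "p \<in> poly_fun \<Longrightarrow> q \<in> poly_fun \<Longrightarrow> (\<lambda>x. p x * q x) \<in> poly_fun"

definition poly_deg_le1 :: "(real^'d::finite \<Rightarrow> real) \<Rightarrow> bool" where
  "poly_deg_le1 p \<longleftrightarrow> (\<exists>a b. p = (\<lambda>x. a + (\<Sum>k\<in>UNIV. b k * x $ k)))"

definition poly_deg_le2 :: "(real^'d::finite \<Rightarrow> real) \<Rightarrow> bool" where
  "poly_deg_le2 p \<longleftrightarrow> (\<exists>a b c. p = (\<lambda>x. a + (\<Sum>k\<in>UNIV. b k * x $ k)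
        + (\<Sum>k\<in>UNIV. \<Sum>l\<in>UNIV. c k l * x $ k * x $ l)))"

definition Gamma :: "('d::finite \<Rightarrow> 'd \<Rightarrow> real^'d \<Rightarrow> real) \<Rightarrow> (real^'d \<Rightarrow> real)
    \<Rightarrow> (real^'d \<Rightarrow> real) \<Rightarrow> real^'d \<Rightarrow> real" where
  "Gamma g f1 f2 x = (\<Sum>i\<in>UNIV. \<Sum>j\<in>UNIV. g i j x * pd i f1 x * pd j f2 x)"

definition dens :: "nat \<Rightarrow> (nat \<Rightarrow> real^'d::finite \<Rightarrow> real) \<Rightarrow> (nat \<Rightarrow> real) \<Rightarrow> real^'d \<Rightarrow> real" where
  "dens n P \<alpha> x = (\<Prod>r<n. P r x powr \<alpha> r)"

definition Lop :: "('d::finite \<Rightarrow> 'd \<Rightarrow> real^'d \<Rightarrow> real) \<Rightarrow> nat \<Rightarrow> (nat \<Rightarrow> real^'d \<Rightarrow> real)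
    \<Rightarrow> (nat \<Rightarrow> real) \<Rightarrow> (real^'d \<Rightarrow> real) \<Rightarrow> real^'d \<Rightarrow> real" where
  "Lop g n P \<alpha> f x =
     (\<Sum>i\<in>UNIV. \<Sum>j\<in>UNIV. g i j x * pd i (pd j f) x)
   + (\<Sum>i\<in>UNIV. (\<Sum>j\<in>UNIV. pd j (g i j) x + g i j x * pd j (\<lambda>y. ln (dens n P \<alpha> y)) x) * pd i f x)"

end

theory Submission
  imports Defs
begin


lemma pd_hasd:
  assumes "(f has_derivative D) (at x)"
  shows "pd i f x = D (axis i 1)"
proof -
  have lin: "linear D" using assms has_derivative_linear by blast
  have 1: "((\<lambda>t::real. x + t *\<^sub>R axis i 1) has_derivative (\<lambda>t. t *\<^sub>R axis i 1)) (at 0)"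
    by (auto intro!: derivative_eq_intros)
  have 2: "(f has_derivative D) (at (x + 0 *\<^sub>R axis i (1::real)))" using assms by simp
  have "((\<lambda>t. f (x + t *\<^sub>R axis i 1)) has_derivative (\<lambda>t. D (t *\<^sub>R axis i 1))) (at 0)"
    using diff_chain_at[OF 1 2] by (simp add: o_def)
  moreover have "(\<lambda>t. D (t *\<^sub>R axis i 1)) = (\<lambda>t. t * D (axis i 1))"
    using lin by (simp add: linear_scale)
  moreover have "(\<lambda>t. t * D (axis i 1)) = (*) (D (axis i 1))" by (auto simp: mult.commute)
  ultimately have "((\<lambda>t. f (x + t *\<^sub>R axis i 1)) has_real_derivative D (axis i 1)) (at 0)"
    by (simp add: has_field_derivative_def)
  then show ?thesis unfolding pd_def by (rule DERIV_imp_deriv)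
qed

lemma pd_cong:
  assumes "open S" "x \<in> S" "\<And>y. y \<in> S \<Longrightarrow> f y = g y"
  shows "pd i f x = pd i g x"
proof -
  obtain e where e: "e > 0" "ball x e \<subseteq> S" using assms(1,2) open_contains_ball by blast
  have "eventually (\<lambda>t::real. f (x + t *\<^sub>R axis i 1) = g (x + t *\<^sub>R axis i 1)) (nhds 0)"
    unfolding eventually_nhds_metric
  proof (intro exI[of _ e] conjI allI impI)
    fix t :: real assume "dist t 0 < e"
    then have "x + t *\<^sub>R axis i 1 \<in> ball x e" by (simp add: dist_norm)
    then show "f (x + t *\<^sub>R axis i 1) = g (x + t *\<^sub>R axis i 1)" using e assms(3) by blast
  qed (use e in auto)
  then show ?thesis unfolding pd_def by (rule deriv_cong_ev) simp
qed

lemma diff_cong: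
  assumes "open S" "x \<in> S" "\<And>y. y \<in> S \<Longrightarrow> f y = g y" "g differentiable at x"
  shows "f differentiable at x"
  using assms has_derivative_transform_within_open[of g _ x UNIV S f] unfolding differentiable_def
  by metis

lemma pd_const[simp]: "pd i (\<lambda>y. c) x = 0"
proof -
  have "((\<lambda>y. c) has_derivative (\<lambda>h. 0)) (at x)" by simp
  from pd_hasd[OF this] show ?thesis by simp
qed

lemma pd_coord: "pd i (\<lambda>y. y $ k) x = (if i = k then 1 else 0)"
proof -
  have "((\<lambda>y::real^'a. y $ k) has_derivative (\<lambda>y. y $ k)) (at x)"
    by (rule bounded_linear_imp_has_derivative) (rule bounded_linear_vec_nth)
  from pd_hasd[OF this] show ?thesis by (simp add: axis_def)
qed

lemma pd_add:
  assumes "f differentiable at x" "g differentiable at x"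
  shows "pd i (\<lambda>y. f y + g y) x = pd i f x + pd i g x"
proof -
  obtain Df Dg where "(f has_derivative Df) (at x)" "(g has_derivative Dg) (at x)"
    using assms unfolding differentiable_def by blast
  then have a: "(f has_derivative Df) (at x)" and b: "(g has_derivative Dg) (at x)" by auto
  show ?thesis using pd_hasd[OF has_derivative_add[OF a b]] pd_hasd[OF a] pd_hasd[OF b] by simp
qed

lemma pd_mult:
  assumes "f differentiable at x" "g differentiable at x"
  shows "pd i (\<lambda>y. f y * g y) x = pd i f x * g x + f x * pd i g x"
proof -
  obtain Df Dg where a: "(f has_derivative Df) (at x)" and b: "(g has_derivative Dg) (at x)"
    using assms unfolding differentiable_def by blast
  have "((\<lambda>y. f y * g y) has_derivative (\<lambda>h. f x * Dg h + Df h * g x)) (at x)"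
    using has_derivative_mult[OF a b] by simp
  from pd_hasd[OF this] pd_hasd[OF a] pd_hasd[OF b] show ?thesis by simp
qed

lemma pd_sum:
  assumes "finite A" "\<And>a. a \<in> A \<Longrightarrow> f a differentiable at x"
  shows "pd i (\<lambda>y. \<Sum>a\<in>A. f a y) x = (\<Sum>a\<in>A. pd i (f a) x)"
  using assms
proof (induction A rule: finite_induct)
  case empty then show ?case by simp
next
  case (insert a A)
  have "pd i (\<lambda>y. \<Sum>a\<in>insert a A. f a y) x = pd i (\<lambda>y. f a y + (\<Sum>a\<in>A. f a y)) x"
    using insert by simp
  also have "\<dots> = pd i (f a) x + pd i (\<lambda>y. \<Sum>a\<in>A. f a y) x"
    by (rule pd_add) (use insert in \<open>auto intro!: differentiable_sum\<close>)
  finally show ?case using insert by simp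
qed

lemma pd_minus:
  assumes "f differentiable at x"
  shows "pd i (\<lambda>y. - f y) x = - pd i f x"
proof -
  obtain Df where a: "(f has_derivative Df) (at x)"
    using assms unfolding differentiable_def by blast
  show ?thesis using pd_hasd[OF a] pd_hasd[OF has_derivative_minus[OF a]] by simp
qed

lemma pd_cmult:
  assumes "f differentiable at x"
  shows "pd i (\<lambda>y. c * f y) x = c * pd i f x"
  using pd_mult[OF differentiable_const assms] by simp

lemma pd_exp:
  assumes "f differentiable at x"
  shows "pd i (\<lambda>y. exp (f y)) x = exp (f x) * pd i f x"
proof -
  obtain Df where a: "(f has_derivative Df) (at x)"
    using assms unfolding differentiable_def by blast
  have "((\<lambda>y. exp (f y)) has_derivative (\<lambda>h. exp (f x) * Df h)) (at x)"
    by (auto intro!: derivative_eq_intros a)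
  from pd_hasd[OF this] pd_hasd[OF a] show ?thesis by simp
qed

lemma pd_ln:
  assumes "f differentiable at x" "f x > 0"
  shows "pd i (\<lambda>y. ln (f y)) x = pd i f x / f x"
proof -
  obtain Df where a: "(f has_derivative Df) (at x)"
    using assms unfolding differentiable_def by blast
  have "((\<lambda>y. ln (f y)) has_derivative (\<lambda>h. Df h / f x)) (at x)"
    using assms(2) by (auto intro!: derivative_eq_intros a simp: field_simps)
  from pd_hasd[OF this] pd_hasd[OF a] show ?thesis by simp
qed

lemma pd_divide:
  assumes "f differentiable at x" "g differentiable at x" "g x \<noteq> 0"
  shows "pd i (\<lambda>y. f y / g y) x = (pd i f x * g x - f x * pd i g x) / (g x)^2"
proof -
  obtain Df Dg where a: "(f has_derivative Df) (at x)" and b: "(g has_derivative Dg) (at x)"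
    using assms unfolding differentiable_def by blast
  have "((\<lambda>y. f y / g y) has_derivative (\<lambda>h. - f x * (inverse (g x) * Dg h * inverse (g x)) + Df h / g x)) (at x)"
    using has_derivative_divide[OF a b assms(3)] by simp
  from pd_hasd[OF this] pd_hasd[OF a] pd_hasd[OF b] assms(3) show ?thesis
    by (simp add: field_simps power2_eq_square)
qed

lemma ln_diff: fixes f :: "real^'d::finite \<Rightarrow> real" shows "f differentiable at x \<Longrightarrow> f x > 0 \<Longrightarrow> (\<lambda>y. ln (f y)) differentiable at x"
proof -
  assume "f differentiable at x" "f x > 0"
  then obtain D where "(f has_derivative D) (at x)" unfolding differentiable_def by blast
  from has_derivative_ln[OF \<open>f x > 0\<close> this] show ?thesis unfolding differentiable_def by blast
qed

lemma exp_diff: fixes f :: "real^'d::finite \<Rightarrow> real" shows "f differentiable at x \<Longrightarrow> (\<lambda>y. exp (f y)) differentiable at x"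
proof -
  assume "f differentiable at x"
  then obtain D where "(f has_derivative D) (at x)" unfolding differentiable_def by blast
  from has_derivative_exp[OF this] show ?thesis unfolding differentiable_def by blast
qed



lemma poly_fun_props: "p \<in> poly_fun \<Longrightarrow> (\<forall>x. p differentiable at x) \<and> (\<forall>j. pd j p \<in> poly_fun)"
proof (induction rule: poly_fun.induct)
  case (const c)
  have "pd j (\<lambda>x. c) = (\<lambda>x. 0)" for j :: 'a by (rule ext) simp
  then show ?case by (simp add: poly_fun.const)
next
  case (coord k)
  have "pd j (\<lambda>x. x $ k) = (\<lambda>x. if j = k then 1 else 0)" for j by (rule ext) (simp add: pd_coord)
  moreover have "(\<lambda>x::real^'a. x $ k) differentiable at x" for x
    using bounded_linear_imp_differentiable[OF bounded_linear_vec_nth] by blast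
  ultimately show ?case by (simp add: poly_fun.const)
next
  case (add p q)
  have "pd j (\<lambda>x. p x + q x) = (\<lambda>x. pd j p x + pd j q x)" for j
    by (rule ext) (use add in \<open>simp add: pd_add\<close>)
  then show ?case using add by (simp add: poly_fun.add)
next
  case (mult p q)
  have "pd j (\<lambda>x. p x * q x) = (\<lambda>x. pd j p x * q x + p x * pd j q x)" for j
    by (rule ext) (use mult in \<open>simp add: pd_mult\<close>)
  then show ?case using mult by (simp add: poly_fun.add poly_fun.mult)
qed

lemma poly_fun_diff: "p \<in> poly_fun \<Longrightarrow> p differentiable at x"
  using poly_fun_props by blast

lemma poly_fun_pd: "p \<in> poly_fun \<Longrightarrow> pd j p \<in> poly_fun"
  using poly_fun_props by blast

lemma poly_fun_sum: "finite A \<Longrightarrow> (\<And>a. a \<in> A \<Longrightarrow> f a \<in> poly_fun) \<Longrightarrow> (\<lambda>x. \<Sum>a\<in>A. f a x) \<in> poly_fun"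
proof (induction A rule: finite_induct)
  case empty then show ?case by (simp add: poly_fun.const)
next
  case (insert a A) then show ?case by (simp add: poly_fun.add)
qed

lemma poly_deg_le2_fun: "poly_deg_le2 p \<Longrightarrow> p \<in> poly_fun"
  unfolding poly_deg_le2_def
  by (auto intro!: poly_fun.add poly_fun_sum poly_fun.mult poly_fun.const poly_fun.coord)

lemma poly_deg_le1_fun: "poly_deg_le1 p \<Longrightarrow> p \<in> poly_fun"
  unfolding poly_deg_le1_def
  by (auto intro!: poly_fun.add poly_fun_sum poly_fun.mult poly_fun.const poly_fun.coord)

lemma poly_deg_le1_pd: "poly_deg_le1 p \<Longrightarrow> pd i p x = pd i p y"
proof -
  assume "poly_deg_le1 p"
  then obtain a b where p: "p = (\<lambda>x. a + (\<Sum>k\<in>UNIV. b k * x $ k))" unfolding poly_deg_le1_def by blast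
  have "pd i p z = b i" for z
  proof -
    have d: "(\<lambda>x. \<Sum>k\<in>UNIV. b k * x $ k) differentiable at z"
      by (intro differentiable_sum ballI poly_fun_diff poly_fun.mult poly_fun.const poly_fun.coord) simp
    have dk: "(\<lambda>x. x $ k) differentiable at z" for k
      by (intro poly_fun_diff poly_fun.coord)
    have "pd i p z = pd i (\<lambda>x. \<Sum>k\<in>UNIV. b k * x $ k) z"
      unfolding p by (subst pd_add[OF differentiable_const d]) simp
    also have "\<dots> = (\<Sum>k\<in>UNIV. pd i (\<lambda>x. b k * x $ k) z)"
      by (rule pd_sum) (use dk in auto)
    also have "\<dots> = (\<Sum>k\<in>UNIV. b k * (if i = k then 1 else 0))"
      by (simp add: pd_cmult[OF dk] pd_coord)
    also have "\<dots> = b i" by (simp add: if_distrib cong: if_cong)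
    finally show ?thesis .
  qed
  then show ?thesis by simp
qed



lemma alg1:
  fixes G dG dD :: "'d::finite \<Rightarrow> 'd \<Rightarrow> real" and Dv :: "'d \<Rightarrow> real"
  shows "(\<Sum>i\<in>UNIV. \<Sum>j\<in>UNIV. G i j * (- dD i j * hx + Dv j * Dv i * hx))
        + (\<Sum>i\<in>UNIV. (\<Sum>j\<in>UNIV. dG i j + G i j * Dv j) * (- Dv i * hx))
       = - ((\<Sum>i\<in>UNIV. \<Sum>j\<in>UNIV. G i j * dD i j) + (\<Sum>i\<in>UNIV. \<Sum>j\<in>UNIV. dG i j * Dv i)) * hx"
proof -
  have "(\<Sum>i\<in>UNIV. \<Sum>j\<in>UNIV. G i j * (- dD i j * hx + Dv j * Dv i * hx))
        + (\<Sum>i\<in>UNIV. (\<Sum>j\<in>UNIV. dG i j + G i j * Dv j) * (- Dv i * hx))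
      = (\<Sum>i\<in>UNIV. \<Sum>j\<in>UNIV. G i j * (- dD i j * hx + Dv j * Dv i * hx))
        + (\<Sum>i\<in>UNIV. \<Sum>j\<in>UNIV. (dG i j + G i j * Dv j) * (- Dv i * hx))"
    by (simp only: sum_distrib_right)
  also have "\<dots> = (\<Sum>i\<in>UNIV. \<Sum>j\<in>UNIV. G i j * (- dD i j * hx + Dv j * Dv i * hx) + (dG i j + G i j * Dv j) * (- Dv i * hx))"
    by (simp only: sum.distrib)
  also have "\<dots> = (\<Sum>i\<in>UNIV. \<Sum>j\<in>UNIV. - (G i j * dD i j * hx) + - (dG i j * Dv i * hx))"
    by (intro sum.cong refl) (simp add: algebra_simps)
  also have "\<dots> = - (\<Sum>i\<in>UNIV. \<Sum>j\<in>UNIV. G i j * dD i j * hx) + - (\<Sum>i\<in>UNIV. \<Sum>j\<in>UNIV. dG i j * Dv i * hx)"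
    by (simp only: sum.distrib sum_negf)
  also have "\<dots> = - ((\<Sum>i\<in>UNIV. \<Sum>j\<in>UNIV. G i j * dD i j) + (\<Sum>i\<in>UNIV. \<Sum>j\<in>UNIV. dG i j * Dv i)) * hx"
    by (simp only: sum_distrib_right minus_add_distrib distrib_right mult_minus_left)
  finally show ?thesis .
qed

lemma alg2:
  fixes G dG ddf :: "'d::finite \<Rightarrow> 'd \<Rightarrow> real" and Dv df hd :: "'d \<Rightarrow> real"
    and ddh :: "'d \<Rightarrow> 'd \<Rightarrow> real"
  shows "(\<Sum>i\<in>UNIV. \<Sum>j\<in>UNIV. G i j * (ddh i j * fx + hd j * df i + (hd i * df j + hx * ddf i j)))
      + (\<Sum>i\<in>UNIV. (\<Sum>j\<in>UNIV. dG i j + G i j * Dv j) * (hd i * fx + hx * df i))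
    = fx * ((\<Sum>i\<in>UNIV. \<Sum>j\<in>UNIV. G i j * ddh i j) + (\<Sum>i\<in>UNIV. (\<Sum>j\<in>UNIV. dG i j + G i j * Dv j) * hd i))
      + hx * ((\<Sum>i\<in>UNIV. \<Sum>j\<in>UNIV. G i j * ddf i j) + (\<Sum>i\<in>UNIV. (\<Sum>j\<in>UNIV. dG i j + G i j * Dv j) * df i))
      + (\<Sum>i\<in>UNIV. \<Sum>j\<in>UNIV. G i j * (hd j * df i + hd i * df j))"
proof -
  have "(\<Sum>i\<in>UNIV. \<Sum>j\<in>UNIV. G i j * (ddh i j * fx + hd j * df i + (hd i * df j + hx * ddf i j)))
      + (\<Sum>i\<in>UNIV. (\<Sum>j\<in>UNIV. dG i j + G i j * Dv j) * (hd i * fx + hx * df i))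
    = (\<Sum>i\<in>UNIV. \<Sum>j\<in>UNIV. G i j * (ddh i j * fx + hd j * df i + (hd i * df j + hx * ddf i j)))
      + (\<Sum>i\<in>UNIV. \<Sum>j\<in>UNIV. (dG i j + G i j * Dv j) * (hd i * fx + hx * df i))"
    by (simp only: sum_distrib_right)
  also have "\<dots> = (\<Sum>i\<in>UNIV. \<Sum>j\<in>UNIV. G i j * (ddh i j * fx + hd j * df i + (hd i * df j + hx * ddf i j))
      + (dG i j + G i j * Dv j) * (hd i * fx + hx * df i))"
    by (simp only: sum.distrib)
  also have "\<dots> = (\<Sum>i\<in>UNIV. \<Sum>j\<in>UNIV. fx * (G i j * ddh i j) + fx * ((dG i j + G i j * Dv j) * hd i)
        + hx * (G i j * ddf i j) + hx * ((dG i j + G i j * Dv j) * df i) + G i j * (hd j * df i + hd i * df j))"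
    by (intro sum.cong refl) (simp add: algebra_simps)
  also have "\<dots> = fx * (\<Sum>i\<in>UNIV. \<Sum>j\<in>UNIV. G i j * ddh i j) + fx * (\<Sum>i\<in>UNIV. \<Sum>j\<in>UNIV. (dG i j + G i j * Dv j) * hd i)
      + hx * (\<Sum>i\<in>UNIV. \<Sum>j\<in>UNIV. G i j * ddf i j) + hx * (\<Sum>i\<in>UNIV. \<Sum>j\<in>UNIV. (dG i j + G i j * Dv j) * df i)
      + (\<Sum>i\<in>UNIV. \<Sum>j\<in>UNIV. G i j * (hd j * df i + hd i * df j))"
    by (simp only: sum.distrib sum_distrib_left)
  also have "\<dots> = fx * ((\<Sum>i\<in>UNIV. \<Sum>j\<in>UNIV. G i j * ddh i j) + (\<Sum>i\<in>UNIV. (\<Sum>j\<in>UNIV. dG i j + G i j * Dv j) * hd i))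
      + hx * ((\<Sum>i\<in>UNIV. \<Sum>j\<in>UNIV. G i j * ddf i j) + (\<Sum>i\<in>UNIV. (\<Sum>j\<in>UNIV. dG i j + G i j * Dv j) * df i))
      + (\<Sum>i\<in>UNIV. \<Sum>j\<in>UNIV. G i j * (hd j * df i + hd i * df j))"
    by (simp only: sum_distrib_right distrib_left)
  finally show ?thesis .
qed

lemma alg3:
  fixes G :: "'d::finite \<Rightarrow> 'd \<Rightarrow> real" and Dv df :: "'d \<Rightarrow> real"
  assumes "\<And>i j. G i j = G j i"
  shows "(\<Sum>i\<in>UNIV. \<Sum>j\<in>UNIV. G i j * (- Dv j * hx * df i + - Dv i * hx * df j))
       = - 2 * hx * (\<Sum>i\<in>UNIV. \<Sum>j\<in>UNIV. G i j * Dv j * df i)"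
proof -
  have "(\<Sum>i\<in>UNIV. \<Sum>j\<in>UNIV. G i j * Dv i * df j) = (\<Sum>j\<in>UNIV. \<Sum>i\<in>UNIV. G i j * Dv i * df j)"
    by (rule sum.swap)
  also have "\<dots> = (\<Sum>i\<in>UNIV. \<Sum>j\<in>UNIV. G i j * Dv j * df i)" using assms by simp
  finally have *: "(\<Sum>i\<in>UNIV. \<Sum>j\<in>UNIV. G i j * Dv i * df j) = (\<Sum>i\<in>UNIV. \<Sum>j\<in>UNIV. G i j * Dv j * df i)" .
  have "(\<Sum>i\<in>UNIV. \<Sum>j\<in>UNIV. G i j * (- Dv j * hx * df i + - Dv i * hx * df j))
     = (\<Sum>i\<in>UNIV. \<Sum>j\<in>UNIV. - hx * (G i j * Dv j * df i) + - hx * (G i j * Dv i * df j))"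
    by (intro sum.cong refl) (simp add: algebra_simps)
  also have "\<dots> = - hx * (\<Sum>i\<in>UNIV. \<Sum>j\<in>UNIV. G i j * Dv j * df i) + - hx * (\<Sum>i\<in>UNIV. \<Sum>j\<in>UNIV. G i j * Dv i * df j)"
    by (simp only: sum_distrib_left sum.distrib)
  finally show ?thesis unfolding * by simp
qed



lemma alg4:
  fixes a G Dv :: "'d \<Rightarrow> real"
  shows "(\<Sum>j\<in>A. a j + G j * - Dv j) * p = (\<Sum>j\<in>A. a j + G j * Dv j) * p - 2 * (\<Sum>j\<in>A. G j * Dv j * p)"
proof -
  have "(\<Sum>j\<in>A. a j + G j * Dv j) * p - 2 * (\<Sum>j\<in>A. G j * Dv j * p)
      = (\<Sum>j\<in>A. (a j + G j * Dv j) * p - 2 * (G j * Dv j * p))"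
    by (simp only: sum_distrib_right sum_distrib_left sum_subtractf)
  also have "\<dots> = (\<Sum>j\<in>A. (a j + G j * - Dv j) * p)"
    by (intro sum.cong refl) (simp add: algebra_simps)
  finally show ?thesis by (simp only: sum_distrib_right)
qed

lemma main_fixed:
  fixes \<Omega> :: "(real^'d::finite) set"
    and g :: "'d \<Rightarrow> 'd \<Rightarrow> real^'d \<Rightarrow> real"
    and n :: nat
    and P :: "nat \<Rightarrow> real^'d \<Rightarrow> real"
    and Lf :: "nat \<Rightarrow> 'd \<Rightarrow> real^'d \<Rightarrow> real"
    and \<alpha> :: "nat \<Rightarrow> real"
  assumes op: "open \<Omega>"
    and sym: "\<And>i j x. x \<in> \<Omega> \<Longrightarrow> g i j x = g j i x"
    and gpol: "\<And>i j. poly_deg_le2 (g i j)"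
    and Ppol: "\<And>r. r < n \<Longrightarrow> P r \<in> poly_fun"
    and Ppos: "\<And>r x. r < n \<Longrightarrow> x \<in> \<Omega> \<Longrightarrow> P r x > 0"
    and Lf1: "\<And>r i. r < n \<Longrightarrow> poly_deg_le1 (Lf r i)"
    and Lf2: "\<And>r i x. r < n \<Longrightarrow> x \<in> \<Omega> \<Longrightarrow> Gamma g (\<lambda>y. y $ i) (\<lambda>y. ln (P r y)) x = Lf r i x"
    and c_def: "c = (\<lambda>r. \<Sum>i\<in>UNIV. pd i (Lf r i) 0)"
  shows "let h = dens n P (\<lambda>r. - \<alpha> r); lam = - (\<Sum>r<n. \<alpha> r * c r) in
       (\<forall>x\<in>\<Omega>. Lop g n P \<alpha> h x = lam * h x) \<and>
       (\<forall>f. smooth_on \<Omega> f \<longrightarrow>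
          (\<forall>x\<in>\<Omega>. (1 / h x) * Lop g n P \<alpha> (\<lambda>y. h y * f y) x - lam * f x
                   = Lop g n P (\<lambda>r. - \<alpha> r) f x))"
proof -
  define h where "h = dens n P (\<lambda>r. - \<alpha> r)"
  define lam where "lam = - (\<Sum>r<n. \<alpha> r * c r)"
  define Lr where "Lr = (\<lambda>y. \<Sum>r<n. \<alpha> r * ln (P r y))"
  define D where "D = (\<lambda>j y. \<Sum>r<n. \<alpha> r * (pd j (P r) y / P r y))"
  have Pd: "P r differentiable at y" if "r < n" for r y using Ppol[OF that] poly_fun_diff by blast
  have pPd: "pd j (P r) differentiable at y" if "r < n" for r j y
    using poly_fun_diff[OF poly_fun_pd[OF Ppol[OF that]]] by blast
  have gd: "g i j differentiable at y" for i j y using poly_fun_diff[OF poly_deg_le2_fun[OF gpol]] by blast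
  have Lrd: "Lr differentiable at y" if "y \<in> \<Omega>" for y
    unfolding Lr_def using that Pd Ppos
    by (intro differentiable_sum ballI differentiable_mult differentiable_const ln_diff) auto
  have Dd: "D j differentiable at y" if "y \<in> \<Omega>" for j y
    unfolding D_def using that pPd Pd Ppos
    by (intro differentiable_sum ballI differentiable_mult differentiable_const differentiable_divide)
       (auto dest: Ppos[of _ y] simp: less_imp_neq[symmetric])
  have pdLr: "pd j Lr y = D j y" if "y \<in> \<Omega>" for j y
  proof -
    have "pd j Lr y = (\<Sum>r<n. pd j (\<lambda>y. \<alpha> r * ln (P r y)) y)"
      unfolding Lr_def using that Pd Ppos
      by (intro pd_sum) (auto intro!: differentiable_mult ln_diff)
    also have "\<dots> = D j y"
      unfolding D_def using that Pd Ppos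
      by (intro sum.cong refl) (simp add: pd_cmult ln_diff pd_ln)
    finally show ?thesis .
  qed
  have dens_eq: "dens n P \<beta> y = exp (\<Sum>r<n. \<beta> r * ln (P r y))" if "y \<in> \<Omega>" for \<beta> y
  proof -
    have "dens n P \<beta> y = (\<Prod>r<n. exp (\<beta> r * ln (P r y)))"
      unfolding dens_def using that Ppos by (intro prod.cong refl) (simp add: powr_def less_imp_neq[symmetric])
    then show ?thesis by (simp add: exp_sum)
  qed
  have h_eq: "h y = exp (- Lr y)" if "y \<in> \<Omega>" for y
    unfolding h_def Lr_def dens_eq[OF that] by (simp add: sum_negf)
  have lnd1: "ln (dens n P \<alpha> y) = Lr y" if "y \<in> \<Omega>" for y
    unfolding Lr_def dens_eq[OF that] by simp
  have lnd2: "ln (dens n P (\<lambda>r. - \<alpha> r) y) = - Lr y" if "y \<in> \<Omega>" for y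
    unfolding Lr_def dens_eq[OF that] by (simp add: sum_negf)
  have pdl1: "pd j (\<lambda>y. ln (dens n P \<alpha> y)) y = D j y" if "y \<in> \<Omega>" for j y
    using pd_cong[OF op that lnd1] pdLr[OF that] by simp
  have pdl2: "pd j (\<lambda>y. ln (dens n P (\<lambda>r. - \<alpha> r) y)) y = - D j y" if "y \<in> \<Omega>" for j y
    using pd_cong[OF op that lnd2] pd_minus[OF Lrd[OF that]] pdLr[OF that] by simp
  have hd: "h differentiable at y" if "y \<in> \<Omega>" for y
    using diff_cong[OF op that h_eq exp_diff[OF differentiable_minus[OF Lrd[OF that]]]] .
  have hpos: "h y > 0" if "y \<in> \<Omega>" for y using h_eq[OF that] by simp
  have pdh: "pd j h y = - D j y * h y" if "y \<in> \<Omega>" for j y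
  proof -
    have "pd j h y = pd j (\<lambda>y. exp (- Lr y)) y" using pd_cong[OF op that h_eq] .
    also have "\<dots> = exp (- Lr y) * (- D j y)"
      using pd_exp[OF differentiable_minus[OF Lrd[OF that]]] pd_minus[OF Lrd[OF that]] pdLr[OF that] by simp
    finally show ?thesis using h_eq[OF that] by simp
  qed
  have pdhd: "pd j h differentiable at y" if "y \<in> \<Omega>" for j y
    by (rule diff_cong[OF op that pdh]) (use that Dd hd in auto)
  have pd2h: "pd i (pd j h) x = - pd i (D j) x * h x + D j x * D i x * h x" if "x \<in> \<Omega>" for i j x
  proof -
    have "pd i (pd j h) x = pd i (\<lambda>y. - D j y * h y) x" using pd_cong[OF op that pdh] .
    also have "\<dots> = - pd i (D j) x * h x + - D j x * (- D i x * h x)"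
      using pd_mult[OF differentiable_minus[OF Dd[OF that]] hd[OF that]]
        pd_minus[OF Dd[OF that]] pdh[OF that] by simp
    finally show ?thesis by simp
  qed
  have key: "(\<Sum>i\<in>UNIV. \<Sum>j\<in>UNIV. g i j x * pd i (D j) x) + (\<Sum>i\<in>UNIV. \<Sum>j\<in>UNIV. pd j (g i j) x * D i x)
      = (\<Sum>r<n. \<alpha> r * c r)" if x: "x \<in> \<Omega>" for x
  proof -
    have gam: "Gamma g (\<lambda>y. y $ i) (\<lambda>y. ln (P r y)) y = (\<Sum>j\<in>UNIV. g i j y * (pd j (P r) y / P r y))"
      if "r < n" "y \<in> \<Omega>" for r i y
    proof -
      have e: "(\<Sum>j\<in>A. if c then f j else 0) = (if c then sum f A else 0)" for A c and f :: "'d \<Rightarrow> real"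
        by simp
      show ?thesis unfolding Gamma_def using that Pd Ppos
        by (simp add: pd_coord pd_ln if_distrib if_distribR e cong: if_cong)
    qed
    have eqO: "(\<Sum>j\<in>UNIV. g i j y * D j y) = (\<Sum>r<n. \<alpha> r * Lf r i y)" if "y \<in> \<Omega>" for i y
    proof -
      have "(\<Sum>j\<in>UNIV. g i j y * D j y) = (\<Sum>j\<in>UNIV. \<Sum>r<n. \<alpha> r * (g i j y * (pd j (P r) y / P r y)))"
        unfolding D_def by (simp add: sum_distrib_left algebra_simps)
      also have "\<dots> = (\<Sum>r<n. \<alpha> r * (\<Sum>j\<in>UNIV. g i j y * (pd j (P r) y / P r y)))"
        by (subst sum.swap) (simp add: sum_distrib_left)
      also have "\<dots> = (\<Sum>r<n. \<alpha> r * Lf r i y)"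
        using gam Lf2 that by (intro sum.cong refl) auto
      finally show ?thesis .
    qed
    have Lfd: "Lf r i differentiable at y" if "r < n" for r i y
      using poly_fun_diff[OF poly_deg_le1_fun[OF Lf1[OF that]]] .
    have step: "(\<Sum>j\<in>UNIV. pd i (g i j) x * D j x + g i j x * pd i (D j) x) = (\<Sum>r<n. \<alpha> r * pd i (Lf r i) 0)" for i
    proof -
      have "pd i (\<lambda>y. \<Sum>j\<in>UNIV. g i j y * D j y) x = pd i (\<lambda>y. \<Sum>r<n. \<alpha> r * Lf r i y) x"
        using pd_cong[OF op x eqO] .
      moreover have "pd i (\<lambda>y. \<Sum>j\<in>UNIV. g i j y * D j y) x = (\<Sum>j\<in>UNIV. pd i (g i j) x * D j x + g i j x * pd i (D j) x)"
        using gd Dd[OF x] by (simp add: pd_sum pd_mult)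
      moreover have "pd i (\<lambda>y. \<Sum>r<n. \<alpha> r * Lf r i y) x = (\<Sum>r<n. \<alpha> r * pd i (Lf r i) 0)"
      proof -
        have Lfc: "pd i (Lf r i) x = pd i (Lf r i) 0" if "r < n" for r
          using poly_deg_le1_pd[OF Lf1[OF that]] by blast
        have "pd i (\<lambda>y. \<Sum>r<n. \<alpha> r * Lf r i y) x = (\<Sum>r<n. pd i (\<lambda>y. \<alpha> r * Lf r i y) x)"
          by (rule pd_sum) (use Lfd in auto)
        also have "\<dots> = (\<Sum>r<n. \<alpha> r * pd i (Lf r i) 0)"
          by (intro sum.cong refl) (simp add: pd_cmult Lfd Lfc)
        finally show ?thesis .
      qed
      ultimately show ?thesis by simp
    qed
    have "(\<Sum>i\<in>UNIV. \<Sum>j\<in>UNIV. pd i (g i j) x * D j x) = (\<Sum>j\<in>UNIV. \<Sum>i\<in>UNIV. pd i (g i j) x * D j x)"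
      by (rule sum.swap)
    also have "\<dots> = (\<Sum>i\<in>UNIV. \<Sum>j\<in>UNIV. pd j (g i j) x * D i x)"
    proof -
      have "pd j (g j i) x = pd j (g i j) x" for i j
        by (rule pd_cong[OF op x]) (rule sym)
      then show ?thesis by simp
    qed
    finally have sw: "(\<Sum>i\<in>UNIV. \<Sum>j\<in>UNIV. pd i (g i j) x * D j x) = (\<Sum>i\<in>UNIV. \<Sum>j\<in>UNIV. pd j (g i j) x * D i x)" .
    have "(\<Sum>i\<in>UNIV. \<Sum>j\<in>UNIV. pd i (g i j) x * D j x) + (\<Sum>i\<in>UNIV. \<Sum>j\<in>UNIV. g i j x * pd i (D j) x)
        = (\<Sum>i\<in>UNIV. \<Sum>r<n. \<alpha> r * pd i (Lf r i) 0)"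
      using step by (simp add: sum.distrib[symmetric])
    also have "\<dots> = (\<Sum>r<n. \<alpha> r * c r)"
      unfolding c_def by (subst sum.swap) (simp add: sum_distrib_left)
    finally show ?thesis using sw by simp
  qed
  have part1: "Lop g n P \<alpha> h x = lam * h x" if x: "x \<in> \<Omega>" for x
  proof -
    have "Lop g n P \<alpha> h x = (\<Sum>i\<in>UNIV. \<Sum>j\<in>UNIV. g i j x * (- pd i (D j) x * h x + D j x * D i x * h x))
        + (\<Sum>i\<in>UNIV. (\<Sum>j\<in>UNIV. pd j (g i j) x + g i j x * D j x) * (- D i x * h x))"
      unfolding Lop_def using x by (simp add: pd2h pdh pdl1)
    also have "\<dots> = - ((\<Sum>i\<in>UNIV. \<Sum>j\<in>UNIV. g i j x * pd i (D j) x) + (\<Sum>i\<in>UNIV. \<Sum>j\<in>UNIV. pd j (g i j) x * D i x)) * h x"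
      by (rule alg1)
    finally show ?thesis unfolding lam_def using key[OF x] by simp
  qed
  have part2: "(1 / h x) * Lop g n P \<alpha> (\<lambda>y. h y * f y) x - lam * f x = Lop g n P (\<lambda>r. - \<alpha> r) f x"
    if sm: "smooth_on \<Omega> f" and x: "x \<in> \<Omega>" for f x
  proof -
    have fd: "f differentiable at y" if "y \<in> \<Omega>" for y
      using sm that op unfolding smooth_on_def
      by (metis differentiable_on_eq_differentiable_at iter_pd.simps(1))
    have pfd: "pd j f differentiable at y" if "y \<in> \<Omega>" for j y
      using sm that op unfolding smooth_on_def
      by (metis differentiable_on_eq_differentiable_at iter_pd.simps)
    have pdhf: "pd j (\<lambda>y. h y * f y) y = pd j h y * f y + h y * pd j f y" if "y \<in> \<Omega>" for j y
      using pd_mult[OF hd[OF that] fd[OF that]] .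
    have pd2hf: "pd i (pd j (\<lambda>y. h y * f y)) x
       = pd i (pd j h) x * f x + pd j h x * pd i f x + (pd i h x * pd j f x + h x * pd i (pd j f) x)" for i j
    proof -
      have "pd i (pd j (\<lambda>y. h y * f y)) x = pd i (\<lambda>y. pd j h y * f y + h y * pd j f y) x"
        using pd_cong[OF op x pdhf] .
      also have "\<dots> = pd i (pd j h) x * f x + pd j h x * pd i f x + (pd i h x * pd j f x + h x * pd i (pd j f) x)"
        using pdhd[OF x] fd[OF x] hd[OF x] pfd[OF x]
        by (simp add: pd_add pd_mult)
      finally show ?thesis .
    qed
    have "Lop g n P \<alpha> (\<lambda>y. h y * f y) x =
      (\<Sum>i\<in>UNIV. \<Sum>j\<in>UNIV. g i j x * (pd i (pd j h) x * f x + pd j h x * pd i f x + (pd i h x * pd j f x + h x * pd i (pd j f) x)))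
      + (\<Sum>i\<in>UNIV. (\<Sum>j\<in>UNIV. pd j (g i j) x + g i j x * D j x) * (pd i h x * f x + h x * pd i f x))"
      unfolding Lop_def using x by (simp add: pd2hf pdhf pdl1)
    also have "\<dots> = f x * Lop g n P \<alpha> h x
      + h x * ((\<Sum>i\<in>UNIV. \<Sum>j\<in>UNIV. g i j x * pd i (pd j f) x) + (\<Sum>i\<in>UNIV. (\<Sum>j\<in>UNIV. pd j (g i j) x + g i j x * D j x) * pd i f x))
      + (\<Sum>i\<in>UNIV. \<Sum>j\<in>UNIV. g i j x * (pd j h x * pd i f x + pd i h x * pd j f x))"
      unfolding Lop_def using x by (simp add: pdl1 alg2)
    also have "(\<Sum>i\<in>UNIV. \<Sum>j\<in>UNIV. g i j x * (pd j h x * pd i f x + pd i h x * pd j f x))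
       = - 2 * h x * (\<Sum>i\<in>UNIV. \<Sum>j\<in>UNIV. g i j x * D j x * pd i f x)"
    proof -
      have "(\<Sum>i\<in>UNIV. \<Sum>j\<in>UNIV. g i j x * (pd j h x * pd i f x + pd i h x * pd j f x))
         = (\<Sum>i\<in>UNIV. \<Sum>j\<in>UNIV. g i j x * (- D j x * h x * pd i f x + - D i x * h x * pd j f x))"
        by (intro sum.cong refl) (simp add: pdh[OF x])
      also have "\<dots> = - 2 * h x * (\<Sum>i\<in>UNIV. \<Sum>j\<in>UNIV. g i j x * D j x * pd i f x)"
        by (rule alg3) (rule sym[OF x])
      finally show ?thesis .
    qed
    finally have E: "Lop g n P \<alpha> (\<lambda>y. h y * f y) x = f x * (lam * h x)
      + h x * ((\<Sum>i\<in>UNIV. \<Sum>j\<in>UNIV. g i j x * pd i (pd j f) x) + (\<Sum>i\<in>UNIV. (\<Sum>j\<in>UNIV. pd j (g i j) x + g i j x * D j x) * pd i f x))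
      + - 2 * h x * (\<Sum>i\<in>UNIV. \<Sum>j\<in>UNIV. g i j x * D j x * pd i f x)"
      using part1[OF x] by simp
    have R: "Lop g n P (\<lambda>r. - \<alpha> r) f x = (\<Sum>i\<in>UNIV. \<Sum>j\<in>UNIV. g i j x * pd i (pd j f) x)
       + (\<Sum>i\<in>UNIV. (\<Sum>j\<in>UNIV. pd j (g i j) x + g i j x * D j x) * pd i f x)
       - 2 * (\<Sum>i\<in>UNIV. \<Sum>j\<in>UNIV. g i j x * D j x * pd i f x)"
    proof -
      have "(\<Sum>i\<in>UNIV. (\<Sum>j\<in>UNIV. pd j (g i j) x + g i j x * - D j x) * pd i f x)
         = (\<Sum>i\<in>UNIV. (\<Sum>j\<in>UNIV. pd j (g i j) x + g i j x * D j x) * pd i f x - 2 * (\<Sum>j\<in>UNIV. g i j x * D j x * pd i f x))"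
        by (intro sum.cong refl alg4)
      also have "\<dots> = (\<Sum>i\<in>UNIV. (\<Sum>j\<in>UNIV. pd j (g i j) x + g i j x * D j x) * pd i f x)
       - 2 * (\<Sum>i\<in>UNIV. \<Sum>j\<in>UNIV. g i j x * D j x * pd i f x)"
        by (simp add: sum_subtractf sum_distrib_left)
      finally show ?thesis unfolding Lop_def using x by (simp add: pdl2)
    qed
    show ?thesis using hpos[OF x] unfolding E R by (simp add: field_simps)
  qed
  show ?thesis unfolding Let_def h_def[symmetric] lam_def[symmetric] using part1 part2 by blast
qed


theorem theorem4p2:
  fixes \<Omega> :: "(real^'d::finite) set"
    and g :: "'d \<Rightarrow> 'd \<Rightarrow> real^'d \<Rightarrow> real"
    and n :: nat
    and P :: "nat \<Rightarrow> real^'d \<Rightarrow> real"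
  assumes "open \<Omega>"
    and "\<And>i j x. x \<in> \<Omega> \<Longrightarrow> g i j x = g j i x"
    and "\<And>x v. x \<in> \<Omega> \<Longrightarrow> v \<noteq> 0 \<Longrightarrow> (\<Sum>i\<in>UNIV. \<Sum>j\<in>UNIV. g i j x * v $ i * v $ j) > 0"
    and "\<And>i j. poly_deg_le2 (g i j)"
    and "\<And>r. r < n \<Longrightarrow> P r \<in> poly_fun"
    and "\<And>r x. r < n \<Longrightarrow> x \<in> \<Omega> \<Longrightarrow> P r x > 0"
    and "\<And>r i. r < n \<Longrightarrow> \<exists>L. poly_deg_le1 L \<and>
            (\<forall>x\<in>\<Omega>. Gamma g (\<lambda>y. y $ i) (\<lambda>y. ln (P r y)) x = L x)"
  shows "\<exists>c :: nat \<Rightarrow> real. \<forall>\<alpha> :: nat \<Rightarrow> real.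
     let h = dens n P (\<lambda>r. - \<alpha> r); lam = - (\<Sum>r<n. \<alpha> r * c r) in
       (\<forall>x\<in>\<Omega>. Lop g n P \<alpha> h x = lam * h x) \<and>
       (\<forall>f. smooth_on \<Omega> f \<longrightarrow>
          (\<forall>x\<in>\<Omega>. (1 / h x) * Lop g n P \<alpha> (\<lambda>y. h y * f y) x - lam * f x
                   = Lop g n P (\<lambda>r. - \<alpha> r) f x))"
  proof -
  have "\<forall>r. \<exists>F. \<forall>i. r < n \<longrightarrow> poly_deg_le1 (F i) \<and>
            (\<forall>x\<in>\<Omega>. Gamma g (\<lambda>y. y $ i) (\<lambda>y. ln (P r y)) x = F i x)"
  proof
    fix r
    show "\<exists>F. \<forall>i. r < n \<longrightarrow> poly_deg_le1 (F i) \<and>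
            (\<forall>x\<in>\<Omega>. Gamma g (\<lambda>y. y $ i) (\<lambda>y. ln (P r y)) x = F i x)"
      by (rule choice) (use assms(7) in blast)
  qed
  from choice[OF this] obtain Lf where Lf: "\<And>r i. r < n \<Longrightarrow> poly_deg_le1 (Lf r i) \<and>
            (\<forall>x\<in>\<Omega>. Gamma g (\<lambda>y. y $ i) (\<lambda>y. ln (P r y)) x = Lf r i x)"
    by blast
  show ?thesis
  proof (intro exI[of _ "\<lambda>r. \<Sum>i\<in>UNIV. pd i (Lf r i) 0"] allI)
    fix \<alpha> :: "nat \<Rightarrow> real"
    show "let h = dens n P (\<lambda>r. - \<alpha> r); lam = - (\<Sum>r<n. \<alpha> r * (\<lambda>r. \<Sum>i\<in>UNIV. pd i (Lf r i) 0) r) in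
       (\<forall>x\<in>\<Omega>. Lop g n P \<alpha> h x = lam * h x) \<and>
       (\<forall>f. smooth_on \<Omega> f \<longrightarrow>
          (\<forall>x\<in>\<Omega>. (1 / h x) * Lop g n P \<alpha> (\<lambda>y. h y * f y) x - lam * f x
                   = Lop g n P (\<lambda>r. - \<alpha> r) f x))"
      by (rule main_fixed[OF assms(1,2,4,5,6), where Lf=Lf]) (use Lf in auto)
  qed
qed

end
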